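(* For every integer $n\ge 3$, $\Delta_n>0$; that is, Bob is strictly more likely than Alice to win the game with $n$ flips. Equivalently, the coefficient of $t^n$ in $f(t)=\frac12\big((1-t)(1-2t)(2t^2+t+1)\big)^{-1/2}-\frac12(1-t)^{-1}$ is strictly positive for all $n\ge3$.
   Context: A fair coin is flipped $n$ times, producing a sequence $x_1,\dots,x_n\in\{H,T\}$ of independent uniformly random outcomes. Alice's score is the number of indices $i\in\{1,\dots,n-1\}$ with $(x_i,x_{i+1})=(H,H)$; Bob's score is the number of indices $i\in\{1,\dots,n-1\}$ with $(x_i,x_{i+1})=(H,T)$. Let $P_n(\mathrm{Bob})$ be the probability that Bob's score is strictly larger than Alice's, $P_n(\mathrm{Alice})$ the probability that Alice's score is strictly larger than Bob's, and $\Delta_n=P_n(\mathrm{Bob})-P_n(\mathrm{Alice})$. The square root is the branch equal to $1$ at $t=0$. *)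

theory Defs
  imports Complex_Main
begin

text \<open>A coin sequence of length n is a bool list of length n; True = H, False = T.
  All 2^n sequences are equally likely (fair independent flips).\<close>

definition outcomes :: "nat \<Rightarrow> bool list set" where
  "outcomes n = {xs. length xs = n}"

definition alice_score :: "bool list \<Rightarrow> nat" where
  "alice_score xs = card {i. i + 1 < length xs \<and> xs ! i \<and> xs ! (i + 1)}"

definition bob_score :: "bool list \<Rightarrow> nat" where
  "bob_score xs = card {i. i + 1 < length xs \<and> xs ! i \<and> \<not> xs ! (i + 1)}"

definition P_Bob :: "nat \<Rightarrow> real" where
  "P_Bob n = real (card {xs \<in> outcomes n. bob_score xs > alice_score xs}) / 2 ^ n"

definition P_Alice :: "nat \<Rightarrow> real" where
  "P_Alice n = real (card {xs \<in> outcomes n. alice_score xs > bob_score xs}) / 2 ^ n"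

definition Delta :: "nat \<Rightarrow> real" where
  "Delta n = P_Bob n - P_Alice n"

end

theory Submission
  imports Defs
begin


fun PP :: "nat \<Rightarrow> (nat \<Rightarrow> int) \<Rightarrow> nat \<Rightarrow> int" where
  "PP 0 F n = F n"
| "PP (Suc k) F n = (\<Sum>j<n. PP k F j)"

lemma PP_zero: "F 0 = 0 \<Longrightarrow> PP k F 0 = 0"
  by (cases k) auto

lemma PP_shift: "F 0 = 0 \<Longrightarrow> PP k F (Suc n) = PP k (\<lambda>m. F (Suc m)) n"
proof (induction k arbitrary: n)
  case 0 then show ?case by simp
next
  case (Suc k)
  have "PP (Suc k) F (Suc n) = PP k F 0 + (\<Sum>j<n. PP k F (Suc j))"
    by (simp only: PP.simps sum.lessThan_Suc_shift)
  also have "\<dots> = (\<Sum>j<n. PP k (\<lambda>m. F (Suc m)) j)"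
    using Suc by (simp add: PP_zero)
  finally show ?case by simp
qed

lemma PP_add: "PP k (\<lambda>m. F m + G m) n = PP k F n + PP k G n"
  by (induction k arbitrary: n) (auto simp: sum.distrib)

lemma PP_comp: "PP a (PP b F) n = PP (a + b) F n"
  by (induction a arbitrary: n) auto

lemma PP_Suc_step: "PP (Suc k) F (Suc n) = PP k F n + PP (Suc k) F n"
  by simp

lemma PP_one: "PP 1 F n = (\<Sum>j<n. F j)"
  by simp

lemma key_identity:
  fixes X Y :: "nat \<Rightarrow> int \<Rightarrow> int"
  assumes X0: "\<And>d. X 0 d = (if d = 0 then 1 else 0)"
    and Y0: "\<And>d. Y 0 d = 0"
    and XS: "\<And>n d. X (Suc n) d = X n d + Y n (d - 1)"
    and YS: "\<And>n d. Y (Suc n) d = X n d + Y n (d + 1)"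
  shows "Y (Suc n) 1 = Y n 1 + Y n (-1)"
proof -
  have aux: "X m (- int k - 1) = PP 1 (\<lambda>j. Y j (- int k - 2)) m" for m k
  proof (induction m)
    case 0 then show ?case using X0 by simp
  next
    case (Suc m)
    have "X (Suc m) (- int k - 1) = X m (- int k - 1) + Y m (- int k - 2)"
      using XS[of m "- int k - 1"] by (simp add: algebra_simps)
    then show ?case using Suc by simp
  qed
  have main: "\<forall>k. Y n (int k) = PP k (\<lambda>m. Y m (- int k)) n \<and>
      X n (int k + 1) + Y n (int k + 2) - Y n (int k + 1) = PP k (\<lambda>m. Y m (- int k - 1)) n"
  proof (induction n)
    case 0
    show ?case using X0 Y0 by (auto simp: PP_zero)
  next
    case (Suc n)
    show ?case
    proof
      fix k
      have R1: "Y (Suc n) (int k) = PP k (\<lambda>m. Y m (- int k)) (Suc n)"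
      proof (cases k)
        case 0 then show ?thesis by simp
      next
        case (Suc k')
        have e1: "Y (Suc n) (int k) = X n (int k) + Y n (int k + 1)" using YS by simp
        have h1: "X n (int k' + 1) + Y n (int k' + 2) - Y n (int k' + 1) = PP k' (\<lambda>m. Y m (- int k' - 1)) n"
          using Suc.IH by blast
        have h2: "Y n (int k) = PP k (\<lambda>m. Y m (- int k)) n"
          using Suc.IH by blast
        have ik: "int k = int k' + 1" using Suc by simp
        have ik2: "- int k' - 1 = - int k" using ik by simp
        have F: "(\<lambda>m. Y m (- int k' - 1)) = (\<lambda>m. Y m (- int k))" using ik2 by simp
        have "Y (Suc n) (int k) = PP k' (\<lambda>m. Y m (- int k)) n + PP k (\<lambda>m. Y m (- int k)) n"
          using e1 h1 h2 ik F by (simp add: algebra_simps)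
        also have "\<dots> = PP k (\<lambda>m. Y m (- int k)) (Suc n)"
          using Suc PP_Suc_step by simp
        finally show ?thesis .
      qed
      have R2: "X (Suc n) (int k + 1) + Y (Suc n) (int k + 2) - Y (Suc n) (int k + 1)
            = PP k (\<lambda>m. Y m (- int k - 1)) (Suc n)"
      proof -
        have "X (Suc n) (int k + 1) + Y (Suc n) (int k + 2) - Y (Suc n) (int k + 1)
            = Y n (int k) + (X n (int (Suc k) + 1) + Y n (int (Suc k) + 2) - Y n (int (Suc k) + 1))"
          using XS[of n "int k + 1"] YS[of n "int k + 2"] YS[of n "int k + 1"]
          by (simp add: algebra_simps)
        also have "\<dots> = PP k (\<lambda>m. Y m (- int k)) n + PP (Suc k) (\<lambda>m. Y m (- int (Suc k) - 1)) n"
        proof -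
          have a: "Y n (int k) = PP k (\<lambda>m. Y m (- int k)) n" using Suc.IH by blast
          have b: "X n (int (Suc k) + 1) + Y n (int (Suc k) + 2) - Y n (int (Suc k) + 1) = PP (Suc k) (\<lambda>m. Y m (- int (Suc k) - 1)) n"
            using Suc.IH by blast
          show ?thesis by (simp only: a b)
        qed
        also have "\<dots> = PP k (\<lambda>m. Y m (- int k)) n + PP k (\<lambda>m. X m (- int k - 1)) n"
        proof -
          have c: "(\<lambda>m. X m (- int k - 1)) = PP 1 (\<lambda>j. Y j (- int k - 2))"
            by (rule ext, rule aux)
          have e: "- int (Suc k) - 1 = - int k - 2" by simp
          have d: "(\<lambda>m. Y m (- int (Suc k) - 1)) = (\<lambda>j. Y j (- int k - 2))"
            by (simp only: e)
          show ?thesis by (simp only: c d PP_comp) simp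
        qed
        also have "\<dots> = PP k (\<lambda>m. X m (- int k - 1) + Y m (- int k)) n"
          by (simp add: PP_add)
        also have "\<dots> = PP k (\<lambda>m. Y (Suc m) (- int k - 1)) n"
          using YS by simp
        also have "\<dots> = PP k (\<lambda>m. Y m (- int k - 1)) (Suc n)"
          using PP_shift[of "\<lambda>m. Y m (- int k - 1)" k n] Y0 by simp
        finally show ?thesis .
      qed
      show "Y (Suc n) (int k) = PP k (\<lambda>m. Y m (- int k)) (Suc n) \<and>
          X (Suc n) (int k + 1) + Y (Suc n) (int k + 2) - Y (Suc n) (int k + 1) =
          PP k (\<lambda>m. Y m (- int k - 1)) (Suc n)" using R1 R2 by blast
    qed
  qed
  have "X n 1 + Y n 2 - Y n 1 = Y n (-1)"
    using main[rule_format, of 0] by simp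
  then show ?thesis using YS[of n 1] by simp
qed



definition pc :: "(bool \<Rightarrow> bool \<Rightarrow> bool) \<Rightarrow> bool list \<Rightarrow> nat" where
  "pc p xs = card {i. i + 1 < length xs \<and> p (xs ! i) (xs ! (i + 1))}"

lemma pc_snoc: "pc p (xs @ [b]) = pc p xs + (if xs \<noteq> [] \<and> p (last xs) b then 1 else 0)"
proof -
  let ?A = "{i. i + 1 < length xs \<and> p (xs ! i) (xs ! (i + 1))}"
  let ?B = "{i. i + 1 = length xs \<and> p (last xs) b}"
  have eq: "{i. i + 1 < length (xs @ [b]) \<and> p ((xs @ [b]) ! i) ((xs @ [b]) ! (i + 1))} = ?A \<union> ?B"
  proof (intro set_eqI iffI)
    fix i assume "i \<in> {i. i + 1 < length (xs @ [b]) \<and> p ((xs @ [b]) ! i) ((xs @ [b]) ! (i + 1))}"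
    then have i: "i + 1 < length xs + 1" and pi: "p ((xs @ [b]) ! i) ((xs @ [b]) ! (i + 1))" by auto
    show "i \<in> ?A \<union> ?B"
    proof (cases "i + 1 < length xs")
      case True
      then show ?thesis using pi by (auto simp: nth_append)
    next
      case False
      then have ii: "i + 1 = length xs" using i by simp
      then have "xs \<noteq> []" by auto
      moreover have li: "i = length xs - 1" using ii by simp
      ultimately have "(xs @ [b]) ! i = last xs" by (simp add: nth_append last_conv_nth)
      moreover have "(xs @ [b]) ! (i + 1) = b" using ii by (simp add: nth_append)
      ultimately show ?thesis using pi ii by auto
    qed
  next
    fix i assume "i \<in> ?A \<union> ?B"
    then show "i \<in> {i. i + 1 < length (xs @ [b]) \<and> p ((xs @ [b]) ! i) ((xs @ [b]) ! (i + 1))}"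
    proof
      assume "i \<in> ?A" then show ?thesis by (auto simp: nth_append)
    next
      assume B: "i \<in> ?B"
      then have ii: "i + 1 = length xs" and pl: "p (last xs) b" by auto
      then have "xs \<noteq> []" by auto
      moreover have li: "i = length xs - 1" using ii by simp
      ultimately have "(xs @ [b]) ! i = last xs" by (simp add: nth_append last_conv_nth)
      moreover have "(xs @ [b]) ! (i + 1) = b" using ii by (simp add: nth_append)
      ultimately show ?thesis using pl ii by auto
    qed
  qed
  have fA: "finite ?A" by (rule finite_subset[of _ "{..<length xs}"]) auto
  have fB: "finite ?B" by (rule finite_subset[of _ "{length xs - 1}"]) auto
  have dis: "?A \<inter> ?B = {}" by auto
  have cB: "card ?B = (if xs \<noteq> [] \<and> p (last xs) b then 1 else 0)"
  proof (cases "xs \<noteq> [] \<and> p (last xs) b")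
    case True
    then have Beq: "?B = {length xs - 1}" by auto
    show ?thesis unfolding Beq using True by simp
  next
    case False
    then have Beq: "?B = {}" by auto
    show ?thesis unfolding Beq using False by simp
  qed
  show ?thesis unfolding pc_def eq using card_Un_disjoint[OF fA fB dis] cB by simp
qed


lemma alice_pc: "alice_score xs = pc (\<lambda>a b. a \<and> b) xs"
  unfolding alice_score_def pc_def by simp
lemma bob_pc: "bob_score xs = pc (\<lambda>a b. a \<and> \<not> b) xs"
  unfolding bob_score_def pc_def by simp

definition hb :: "bool list \<Rightarrow> bool" where "hb xs = (xs \<noteq> [] \<and> last xs)"
definition dv :: "bool list \<Rightarrow> int" where "dv xs = int (bob_score xs) - int (alice_score xs)"

lemma hb_snoc[simp]: "hb (xs @ [b]) = b" unfolding hb_def by simp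

lemma dv_snoc_T: "dv (xs @ [True]) = dv xs - (if hb xs then 1 else 0)"
  unfolding dv_def alice_pc bob_pc pc_snoc hb_def by simp

lemma dv_snoc_F: "dv (xs @ [False]) = dv xs + (if hb xs then 1 else 0)"
  unfolding dv_def alice_pc bob_pc pc_snoc hb_def by simp

lemma dv_nil: "dv [] = 0"
  unfolding dv_def alice_score_def bob_score_def by simp

definition cnt :: "nat \<Rightarrow> (bool list \<Rightarrow> bool) \<Rightarrow> nat" where
  "cnt n P = card {xs. length xs = n \<and> P xs}"

lemma fin_len: "finite {xs :: bool list. length xs = n \<and> P xs}"
proof -
  have "finite {xs :: bool list. set xs \<subseteq> UNIV \<and> length xs = n}"
    by (rule finite_lists_length_eq) simp
  then show ?thesis by (rule finite_subset[rotated]) auto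
qed

lemma cnt_disj:
  assumes "\<And>xs. P xs = (Q xs \<or> R xs)" and "\<And>xs. Q xs \<Longrightarrow> \<not> R xs"
  shows "cnt n P = cnt n Q + cnt n R"
proof -
  have "{xs. length xs = n \<and> P xs} = {xs. length xs = n \<and> Q xs} \<union> {xs. length xs = n \<and> R xs}"
    using assms(1) by auto
  moreover have "{xs. length xs = n \<and> Q xs} \<inter> {xs. length xs = n \<and> R xs} = {}"
    using assms(2) by auto
  ultimately show ?thesis unfolding cnt_def
    by (simp add: card_Un_disjoint fin_len)
qed

lemma cnt_cong: "(\<And>xs. P xs = Q xs) \<Longrightarrow> cnt n P = cnt n Q"
  unfolding cnt_def by simp

lemma cnt_False: "cnt n (\<lambda>_. False) = 0"
  unfolding cnt_def by simp

lemma cnt_0: "cnt 0 P = (if P [] then 1 else 0)"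
proof -
  have "{xs :: bool list. length xs = 0 \<and> P xs} = (if P [] then {[]} else {})" by auto
  then show ?thesis unfolding cnt_def by simp
qed

lemma cnt_Suc: "cnt (Suc n) P = cnt n (\<lambda>xs. P (xs @ [True])) + cnt n (\<lambda>xs. P (xs @ [False]))"
proof -
  let ?T = "{xs. length xs = n \<and> P (xs @ [True])}"
  let ?F = "{xs. length xs = n \<and> P (xs @ [False])}"
  have eq: "{xs. length xs = Suc n \<and> P xs} = (\<lambda>xs. xs @ [True]) ` ?T \<union> (\<lambda>xs. xs @ [False]) ` ?F"
  proof (intro set_eqI iffI)
    fix xs assume "xs \<in> {xs. length xs = Suc n \<and> P xs}"
    then have l: "length xs = Suc n" and p: "P xs" by auto
    then have ne: "xs \<noteq> []" by auto
    have xs: "xs = butlast xs @ [last xs]" using ne by simp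
    have lb: "length (butlast xs) = n" using l by simp
    show "xs \<in> (\<lambda>xs. xs @ [True]) ` ?T \<union> (\<lambda>xs. xs @ [False]) ` ?F"
    proof (cases "last xs")
      case True
      then have e: "xs = butlast xs @ [True]" using xs by simp
      have "butlast xs \<in> ?T" using lb p e by simp
      then have "xs \<in> (\<lambda>xs. xs @ [True]) ` ?T" using e by (rule rev_image_eqI)
      then show ?thesis by (rule UnI1)
    next
      case False
      then have e: "xs = butlast xs @ [False]" using xs by simp
      have "butlast xs \<in> ?F" using lb p e by simp
      then have "xs \<in> (\<lambda>xs. xs @ [False]) ` ?F" using e by (rule rev_image_eqI)
      then show ?thesis by (rule UnI2)
    qed
  next
    fix xs assume "xs \<in> (\<lambda>xs. xs @ [True]) ` ?T \<union> (\<lambda>xs. xs @ [False]) ` ?F"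
    then show "xs \<in> {xs. length xs = Suc n \<and> P xs}" by auto
  qed
  have dis: "(\<lambda>xs. xs @ [True]) ` ?T \<inter> (\<lambda>xs. xs @ [False]) ` ?F = {}" by auto
  have i1: "inj_on (\<lambda>xs. xs @ [True]) ?T" by (rule inj_onI) simp
  have i2: "inj_on (\<lambda>xs. xs @ [False]) ?F" by (rule inj_onI) simp
  show ?thesis unfolding cnt_def eq
    by (simp add: card_Un_disjoint fin_len dis card_image i1 i2)
qed



definition XX :: "nat \<Rightarrow> int \<Rightarrow> int" where
  "XX n d = int (cnt n (\<lambda>xs. \<not> hb xs \<and> dv xs = d))"
definition YY :: "nat \<Rightarrow> int \<Rightarrow> int" where
  "YY n d = int (cnt n (\<lambda>xs. hb xs \<and> dv xs = d))"

lemma hb_nil[simp]: "hb [] = False" unfolding hb_def by simp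

lemma XX0: "XX 0 d = (if d = 0 then 1 else 0)"
  unfolding XX_def cnt_0 by (simp add: dv_nil)

lemma YY0: "YY 0 d = 0"
  unfolding YY_def cnt_0 by simp

lemma XXS: "XX (Suc n) d = XX n d + YY n (d - 1)"
proof -
  have a: "cnt n (\<lambda>xs. \<not> hb (xs @ [True]) \<and> dv (xs @ [True]) = d) = 0"
    by (simp add: cnt_False)
  have b: "cnt n (\<lambda>xs. \<not> hb (xs @ [False]) \<and> dv (xs @ [False]) = d)
     = cnt n (\<lambda>xs. \<not> hb xs \<and> dv xs = d) + cnt n (\<lambda>xs. hb xs \<and> dv xs = d - 1)"
    by (rule cnt_disj) (auto simp: dv_snoc_F)
  show ?thesis unfolding XX_def YY_def cnt_Suc[of n] a b by simp
qed

lemma YYS: "YY (Suc n) d = XX n d + YY n (d + 1)"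
proof -
  have a: "cnt n (\<lambda>xs. hb (xs @ [False]) \<and> dv (xs @ [False]) = d) = 0"
    by (simp add: cnt_False)
  have b: "cnt n (\<lambda>xs. hb (xs @ [True]) \<and> dv (xs @ [True]) = d)
     = cnt n (\<lambda>xs. \<not> hb xs \<and> dv xs = d) + cnt n (\<lambda>xs. hb xs \<and> dv xs = d + 1)"
    by (rule cnt_disj) (auto simp: dv_snoc_T)
  show ?thesis unfolding XX_def YY_def cnt_Suc[of n] a b by simp
qed

lemma YY_rec: "YY (Suc n) 1 = YY n 1 + YY n (-1)"
  by (rule key_identity[of XX YY]) (auto simp: XX0 YY0 XXS YYS)

definition SS :: "nat \<Rightarrow> int" where
  "SS n = int (cnt n (\<lambda>xs. dv xs > 0)) - int (cnt n (\<lambda>xs. dv xs < 0))"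

lemma SS_Suc: "SS (Suc n) = 2 * SS n + YY n (-1) - YY n 1"
proof -
  define Bx where "Bx = cnt n (\<lambda>xs. \<not> hb xs \<and> dv xs > 0)"
  define By where "By = cnt n (\<lambda>xs. hb xs \<and> dv xs > 0)"
  define Ax where "Ax = cnt n (\<lambda>xs. \<not> hb xs \<and> dv xs < 0)"
  define Ay where "Ay = cnt n (\<lambda>xs. hb xs \<and> dv xs < 0)"
  define y0 where "y0 = cnt n (\<lambda>xs. hb xs \<and> dv xs = 0)"
  define y1 where "y1 = cnt n (\<lambda>xs. hb xs \<and> dv xs = 1)"
  define ym where "ym = cnt n (\<lambda>xs. hb xs \<and> dv xs = -1)"
  define g1 where "g1 = cnt n (\<lambda>xs. hb xs \<and> dv xs > 1)"
  define g0 where "g0 = cnt n (\<lambda>xs. hb xs \<and> dv xs \<ge> 0)"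
  define l1 where "l1 = cnt n (\<lambda>xs. hb xs \<and> dv xs < 1)"
  define lm where "lm = cnt n (\<lambda>xs. hb xs \<and> dv xs < -1)"
  have 1: "cnt n (\<lambda>xs. dv xs > 0) = Bx + By" unfolding Bx_def By_def
    by (rule cnt_disj) auto
  have 2: "cnt n (\<lambda>xs. dv xs < 0) = Ax + Ay" unfolding Ax_def Ay_def
    by (rule cnt_disj) auto
  have 3: "cnt n (\<lambda>xs. dv (xs @ [True]) > 0) = Bx + g1" unfolding Bx_def g1_def
    by (rule cnt_disj) (auto simp: dv_snoc_T)
  have 4: "By = g1 + y1" unfolding By_def g1_def y1_def
    by (rule cnt_disj) auto
  have 5: "cnt n (\<lambda>xs. dv (xs @ [False]) > 0) = Bx + g0" unfolding Bx_def g0_def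
    by (rule cnt_disj) (auto simp: dv_snoc_F)
  have 6: "g0 = By + y0" unfolding By_def g0_def y0_def
    by (rule cnt_disj) auto
  have 7: "cnt n (\<lambda>xs. dv (xs @ [True]) < 0) = Ax + l1" unfolding Ax_def l1_def
    by (rule cnt_disj) (auto simp: dv_snoc_T)
  have 8: "l1 = Ay + y0" unfolding Ay_def l1_def y0_def
    by (rule cnt_disj) auto
  have 9: "cnt n (\<lambda>xs. dv (xs @ [False]) < 0) = Ax + lm" unfolding Ax_def lm_def
    by (rule cnt_disj) (auto simp: dv_snoc_F)
  have 10: "Ay = lm + ym" unfolding Ay_def lm_def ym_def
    by (rule cnt_disj) auto
  have "SS (Suc n) = int (Bx + g1 + (Bx + g0)) - int (Ax + l1 + (Ax + lm))"
    unfolding SS_def cnt_Suc[of n] 3 5 7 9 by simp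
  moreover have "SS n = int (Bx + By) - int (Ax + Ay)" unfolding SS_def 1 2 by simp
  moreover have "YY n (-1) = int ym" "YY n 1 = int y1" unfolding YY_def ym_def y1_def by simp_all
  ultimately show ?thesis using 4 6 8 10 by simp
qed

lemma SS_eq: "SS n = YY n 1"
proof (induction n)
  case 0
  show ?case unfolding SS_def YY0 cnt_0 by (simp add: dv_nil)
next
  case (Suc n)
  then show ?case using SS_Suc YY_rec by simp
qed

lemma XX_nonneg: "XX n d \<ge> 0" unfolding XX_def by simp
lemma YY_nonneg: "YY n d \<ge> 0" unfolding YY_def by simp

lemma YY_pos: "n \<ge> 3 \<Longrightarrow> YY n 1 \<ge> 1"
proof (induction n rule: nat_induct_at_least)
  case base
  have "YY 3 1 = XX 2 1 + YY 2 2" using YYS[of 2 1] by (simp add: numeral_eq_Suc)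
  moreover have "XX 2 1 = XX 1 1 + YY 1 0" using XXS[of 1 1] by (simp add: numeral_eq_Suc)
  moreover have "YY 1 0 = XX 0 0 + YY 0 1" using YYS[of 0 0] by simp
  ultimately show ?case using XX_nonneg[of 1 1] YY_nonneg[of 2 2] XX0 YY0 by simp
next
  case (Suc n)
  then show ?case using YY_rec[of n] YY_nonneg[of n "-1"] by simp
qed

theorem mainTheorem3:
  fixes n :: nat
  assumes "n \<ge> 3"
  shows "Delta n > 0"
proof -
  have eB: "{xs \<in> outcomes n. bob_score xs > alice_score xs} = {xs. length xs = n \<and> dv xs > 0}"
    unfolding outcomes_def dv_def by auto
  have eA: "{xs \<in> outcomes n. alice_score xs > bob_score xs} = {xs. length xs = n \<and> dv xs < 0}"
    unfolding outcomes_def dv_def by auto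
  have "SS n \<ge> 1" using SS_eq YY_pos assms by simp
  then have lt: "cnt n (\<lambda>xs. dv xs < 0) < cnt n (\<lambda>xs. dv xs > 0)" unfolding SS_def by simp
  have "Delta n = (real (cnt n (\<lambda>xs. dv xs > 0)) - real (cnt n (\<lambda>xs. dv xs < 0))) / 2 ^ n"
    unfolding Delta_def P_Bob_def P_Alice_def eB eA cnt_def by (simp add: diff_divide_distrib)
  moreover have "real (cnt n (\<lambda>xs. dv xs > 0)) - real (cnt n (\<lambda>xs. dv xs < 0)) > 0"
    using lt by simp
  ultimately show ?thesis by simp
qed


end
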